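(* With $i=\sqrt{-1}$, \begin{align*} \overline{S}(i,q)&=\sum_{n=1}^\infty q^{n^2}-\sum_{n=1}^\infty(-1)^nq^{2n^2},\\ \overline{S}_1(i,q)&=\sum_{n=1}^\infty q^{(2n-1)^2},\\ \overline{S}_2(i,q)&=\sum_{n=1}^\infty q^{(2n)^2}-\sum_{n=1}^\infty(-1)^nq^{2n^2}. \end{align*}
   Context: $(a;q)_\infty=\prod_{k\ge0}(1-aq^k)$. Define \begin{align*} \overline{S}(z,q)&=\sum_{n=1}^\infty\frac{q^n(-q^{n+1};q)_\infty(q^{n+1};q)_\infty}{(zq^n;q)_\infty(z^{-1}q^n;q)_\infty},\\ \overline{S}_1(z,q)&=\sum_{n=0}^\infty\frac{q^{2n+1}(-q^{2n+2};q)_\infty(q^{2n+2};q)_\infty}{(zq^{2n+1};q)_\infty(z^{-1}q^{2n+1};q)_\infty},\\ \overline{S}_2(z,q)&=\sum_{n=1}^\infty\frac{q^{2n}(-q^{2n+1};q)_\infty(q^{2n+1};q)_\infty}{(zq^{2n};q)_\infty(z^{-1}q^{2n};q)_\infty}. \end{align*} *)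

theory Defs
  imports "HOL-Analysis.Analysis"
begin

definition qpochinf :: "complex \<Rightarrow> complex \<Rightarrow> complex" where
  "qpochinf a q = (\<Prod>k. 1 - a * q ^ k)"

definition Sbar :: "complex \<Rightarrow> complex \<Rightarrow> complex" where
  "Sbar z q = (\<Sum>n. let m = Suc n in
      q ^ m * qpochinf (- (q ^ (m + 1))) q * qpochinf (q ^ (m + 1)) q
      / (qpochinf (z * q ^ m) q * qpochinf (inverse z * q ^ m) q))"

definition Sbar1 :: "complex \<Rightarrow> complex \<Rightarrow> complex" where
  "Sbar1 z q = (\<Sum>n. let m = 2 * n + 1 in
      q ^ m * qpochinf (- (q ^ (m + 1))) q * qpochinf (q ^ (m + 1)) q
      / (qpochinf (z * q ^ m) q * qpochinf (inverse z * q ^ m) q))"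

definition Sbar2 :: "complex \<Rightarrow> complex \<Rightarrow> complex" where
  "Sbar2 z q = (\<Sum>n. let m = 2 * Suc n in
      q ^ m * qpochinf (- (q ^ (m + 1))) q * qpochinf (q ^ (m + 1)) q
      / (qpochinf (z * q ^ m) q * qpochinf (inverse z * q ^ m) q))"

end

theory Submission
  imports Defs
begin


definition fin :: "complex \<Rightarrow> complex \<Rightarrow> nat \<Rightarrow> complex" where
  "fin a t m = (\<Prod>k<m. 1 - a * t ^ k)"

lemma fin_Suc: "fin a t (Suc m) = fin a t m * (1 - a * t ^ m)"
  by (simp add: fin_def)

lemma fin_0[simp]: "fin a t 0 = 1" by (simp add: fin_def)

lemma qp_conv:
  fixes a t :: "'a::{real_normed_field,banach}"
  assumes "norm t < 1"
  shows "convergent_prod (\<lambda>k. 1 - a * t ^ k)"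
proof -
  have "summable (\<lambda>k. norm a * norm t ^ k)"
    using assms by (intro summable_mult summable_geometric) auto
  moreover have "(\<lambda>k. norm ((1 - a * t ^ k) - 1)) = (\<lambda>k. norm a * norm t ^ k)"
    by (simp add: norm_mult norm_power)
  ultimately have "summable (\<lambda>k. norm ((1 - a * t ^ k) - 1))" by simp
  hence "abs_convergent_prod (\<lambda>k. 1 - a * t ^ k)"
    by (rule summable_imp_abs_convergent_prod)
  thus ?thesis by (rule abs_convergent_prod_imp_convergent_prod)
qed

lemma qp_has_prod:
  assumes "norm t < 1"
  shows "(\<lambda>k. 1 - a * t ^ k) has_prod qpochinf a t"
  unfolding qpochinf_def using qp_conv[OF assms] by (rule convergent_prod_has_prod)

lemma qp_lim:
  assumes "norm t < 1"
  shows "(\<lambda>m. fin a t m) \<longlonglongrightarrow> qpochinf a t"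
proof -
  have "(\<lambda>n. \<Prod>i\<le>n. 1 - a * t ^ i) \<longlonglongrightarrow> qpochinf a t"
    unfolding qpochinf_def using qp_conv[OF assms] by (rule convergent_prod_LIMSEQ)
  thus ?thesis unfolding fin_def by (simp add: LIMSEQ_lessThan_iff_atMost)
qed

lemma qp_nz:
  assumes "norm t < 1" "\<And>k. 1 - a * t ^ k \<noteq> 0"
  shows "qpochinf a t \<noteq> 0"
  unfolding qpochinf_def using qp_conv[OF assms(1)] assms(2) by (rule prodinf_nonzero)

lemma qp_shift:
  assumes "norm t < 1"
  shows "qpochinf a t = fin a t m * qpochinf (a * t ^ m) t"
proof -
  have "(\<lambda>k. 1 - a * t ^ k) has_prod (fin a t m * (\<Prod>k. 1 - a * t ^ (k + m)))"
    unfolding fin_def by (rule has_prod_ignore_initial_segment'[OF qp_conv[OF assms]])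
  moreover have "(\<Prod>k. 1 - a * t ^ (k + m)) = qpochinf (a * t ^ m) t"
    unfolding qpochinf_def by (simp add: power_add mult_ac)
  ultimately show ?thesis using qp_has_prod[OF assms, of a] has_prod_unique2 by metis
qed

lemma qp_mult_neg:
  assumes "norm t < 1"
  shows "qpochinf a t * qpochinf (-a) t = qpochinf (a^2) (t^2)"
proof -
  have "qpochinf a t * qpochinf (-a) t = (\<Prod>k. (1 - a * t ^ k) * (1 - (-a) * t ^ k))"
    unfolding qpochinf_def by (rule prodinf_mult[OF qp_conv[OF assms] qp_conv[OF assms]])
  also have "\<dots> = qpochinf (a^2) (t^2)"
    unfolding qpochinf_def by (rule prodinf_cong) (simp add: algebra_simps power2_eq_square power_mult_distrib flip: power_mult)
  finally show ?thesis .
qed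

lemma fin_split: "fin a t (2 * n) = fin a (t^2) n * fin (a * t) (t^2) n"
proof (induction n)
  case (Suc n)
  have "fin a t (2 * Suc n) = fin a t (2 * n) * (1 - a * t ^ (2*n)) * (1 - a * t ^ (Suc (2*n)))"
    by (simp add: fin_Suc)
  also have "\<dots> = fin a (t^2) (Suc n) * fin (a * t) (t^2) (Suc n)"
    by (simp add: Suc fin_Suc power_mult)
  finally show ?case .
qed simp

lemma qp_split:
  assumes "norm t < 1"
  shows "qpochinf a t = qpochinf a (t^2) * qpochinf (a * t) (t^2)"
proof -
  have t2: "norm (t^2) < 1" using assms by (simp add: norm_power power_less_one_iff)
  have "(\<lambda>n. fin a t (2 * n)) \<longlonglongrightarrow> qpochinf a t"
    using LIMSEQ_subseq_LIMSEQ[OF qp_lim[OF assms], of "\<lambda>n. 2 * n"]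
    by (simp add: strict_mono_def o_def)
  moreover have "(\<lambda>n. fin a t (2 * n)) \<longlonglongrightarrow> qpochinf a (t^2) * qpochinf (a * t) (t^2)"
    unfolding fin_split by (intro tendsto_mult qp_lim t2)
  ultimately show ?thesis by (rule LIMSEQ_unique)
qed



fun gb :: "complex \<Rightarrow> nat \<Rightarrow> nat \<Rightarrow> complex" where
  "gb t 0 k = (if k = 0 then 1 else 0)"
| "gb t (Suc N) 0 = 1"
| "gb t (Suc N) (Suc k) = gb t N k + t ^ Suc k * gb t N (Suc k)"

fun tri :: "nat \<Rightarrow> nat" where
  "tri 0 = 0"
| "tri (Suc k) = tri k + k"

lemma gb_zero: "N < k \<Longrightarrow> gb t N k = 0"
proof (induction N arbitrary: k)
  case (Suc N)
  then obtain k' where "k = Suc k'" by (cases k) auto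
  thus ?case using Suc by simp
qed simp

lemma gb_N0[simp]: "gb t N 0 = 1" by (cases N) auto

lemma fin_Suc': "fin a t (Suc N) = (1 - a) * fin (a * t) t N"
  unfolding fin_def by (subst prod.lessThan_Suc_shift) (simp add: mult_ac)

lemma gb_closed: "k \<le> N \<Longrightarrow> gb t N k * fin t t k * fin t t (N - k) = fin t t N"
proof (induction N arbitrary: k)
  case 0 thus ?case by simp
next
  case (Suc N)
  show ?case
  proof (cases k)
    case 0 thus ?thesis by simp
  next
    case (Suc k')
    with Suc.prems have k': "k' \<le> N" by simp
    have A: "gb t N k' * fin t t (Suc k') * fin t t (N - k') = fin t t N * (1 - t * t ^ k')"
      using Suc.IH[OF k'] by (simp add: fin_Suc mult_ac)
    have B: "t ^ Suc k' * gb t N (Suc k') * fin t t (Suc k') * fin t t (N - k')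
          = fin t t N * (t ^ Suc k' - t * t ^ N)"
    proof (cases "k' = N")
      case True thus ?thesis by (simp add: gb_zero)
    next
      case False
      hence k'': "Suc k' \<le> N" using k' by simp
      have e: "N - k' = Suc (N - Suc k')" using k'' by simp
      have "t ^ Suc k' * gb t N (Suc k') * fin t t (Suc k') * fin t t (N - k')
          = t ^ Suc k' * (gb t N (Suc k') * fin t t (Suc k') * fin t t (N - Suc k')) * (1 - t * t ^ (N - Suc k'))"
        unfolding e by (simp add: fin_Suc mult_ac)
      also have "\<dots> = t ^ Suc k' * fin t t N * (1 - t * t ^ (N - Suc k'))"
        using Suc.IH[OF k''] by simp
      also have "\<dots> = fin t t N * (t ^ Suc k' - t ^ Suc k' * t * t ^ (N - Suc k'))"
        by (simp add: algebra_simps)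
      also have "t ^ Suc k' * t * t ^ (N - Suc k') = t * t ^ N"
      proof -
        have "Suc k' + (N - Suc k') = N" using k'' by simp
        hence "t ^ Suc k' * t ^ (N - Suc k') = t ^ N" by (metis power_add)
        thus ?thesis by (simp add: mult_ac)
      qed
      finally show ?thesis .
    qed
    have "gb t (Suc N) k * fin t t k * fin t t (Suc N - k)
        = gb t N k' * fin t t (Suc k') * fin t t (N - k')
          + t ^ Suc k' * gb t N (Suc k') * fin t t (Suc k') * fin t t (N - k')"
      using Suc by (simp add: algebra_simps)
    also have "\<dots> = fin t t N * (1 - t * t ^ N)"
      unfolding A B by (simp add: algebra_simps)
    finally show ?thesis by (simp add: fin_Suc)
  qed
qed

lemma qbinom_finite:
  "fin (-x) t N = (\<Sum>k\<le>N. gb t N k * t ^ tri k * x ^ k)"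
proof (induction N arbitrary: x)
  case 0 thus ?case by simp
next
  case (Suc N)
  define f where "f k = gb t N k * t ^ tri k * (x * t) ^ k" for k
  have fN: "f (Suc N) = 0" by (simp add: f_def gb_zero)
  have F: "fin (-x) t (Suc N) = (1 + x) * (\<Sum>k\<le>N. f k)"
    by (simp add: fin_Suc' Suc.IH[of "x * t"] f_def)
  have "(\<Sum>k\<le>N. f k) = (\<Sum>k\<le>Suc N. f k)" using fN by simp
  also have "\<dots> = 1 + (\<Sum>k\<le>N. gb t N (Suc k) * t ^ Suc k * t ^ tri (Suc k) * x ^ Suc k)"
    by (subst sum.atMost_Suc_shift) (simp add: f_def power_mult_distrib mult_ac)
  finally have E1: "(\<Sum>k\<le>N. f k) = 1 + (\<Sum>k\<le>N. gb t N (Suc k) * t ^ Suc k * t ^ tri (Suc k) * x ^ Suc k)" .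
  have E2: "x * (\<Sum>k\<le>N. f k) = (\<Sum>k\<le>N. gb t N k * t ^ tri (Suc k) * x ^ Suc k)"
    by (simp add: f_def sum_distrib_left power_mult_distrib power_add mult_ac)
  have "fin (-x) t (Suc N) = (\<Sum>k\<le>N. f k) + x * (\<Sum>k\<le>N. f k)"
    unfolding F by (simp add: algebra_simps)
  also have "\<dots> = 1 + (\<Sum>k\<le>N. gb t N (Suc k) * t ^ Suc k * t ^ tri (Suc k) * x ^ Suc k)
      + (\<Sum>k\<le>N. gb t N k * t ^ tri (Suc k) * x ^ Suc k)"
    unfolding E2 by (subst E1) simp
  also have "\<dots> = (\<Sum>k\<le>Suc N. gb t (Suc N) k * t ^ tri k * x ^ k)"
    by (subst sum.atMost_Suc_shift) (simp add: algebra_simps sum.distrib)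
  finally show ?case .
qed



lemma factor_nz: fixes x :: complex shows "norm x < 1 \<Longrightarrow> 1 - x \<noteq> 0"
  by auto

lemma factor_tt_nz: "norm (t::complex) < 1 \<Longrightarrow> 1 - t * t ^ k \<noteq> 0"
proof (rule factor_nz)
  assume "norm t < 1"
  thus "norm (t * t ^ k) < 1"
    by (simp add: norm_mult norm_power power_less_one_iff flip: power_Suc)
qed

lemma fin_tt_nz: "norm t < 1 \<Longrightarrow> fin t t m \<noteq> 0"
  unfolding fin_def using factor_tt_nz[of t] by (simp add: prod_zero_iff)

lemma qp_tt_nz: "norm t < 1 \<Longrightarrow> qpochinf t t \<noteq> 0"
proof (rule qp_nz)
  fix k assume "norm t < 1"
  have "norm (t * t ^ k) < 1" using \<open>norm t < 1\<close>
    by (simp add: norm_mult norm_power power_less_one_iff flip: power_Suc)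
  thus "1 - t * t ^ k \<noteq> 0" by (rule factor_nz)
qed

lemma fin_bounds:
  assumes "norm t < 1"
  shows "\<exists>L U. 0 < L \<and> (\<forall>m. L \<le> norm (fin t t m) \<and> norm (fin t t m) \<le> U)"
proof -
  define r where "r = norm t"
  have r: "0 \<le> r" "r < 1" using assms by (auto simp: r_def)
  define g where "g j = 1 - (-r) * r ^ j" for j
  define h where "h j = 1 - r * r ^ j" for j
  have cg: "convergent_prod g" unfolding g_def using r by (intro qp_conv) auto
  have ch: "convergent_prod h" unfolding h_def using r by (intro qp_conv) auto
  have hpos: "0 < h j" for j
  proof -
    have "r ^ j \<le> 1" using r by (simp add: power_le_one)
    hence "r * r ^ j \<le> r" using r by (simp add: mult_left_le)
    hence "r * r ^ j < 1" using r by simp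
    thus ?thesis by (simp add: h_def)
  qed
  have h1: "h j \<le> 1" for j using r by (simp add: h_def)
  have g1: "1 \<le> g j" for j using r by (simp add: g_def)
  define L where "L = prodinf h"
  define U where "U = prodinf g"
  have L0: "0 < L" unfolding L_def using ch hpos by (rule less_0_prodinf)
  have "L \<le> norm (fin t t m) \<and> norm (fin t t m) \<le> U" for m
  proof
    have "L \<le> prod h {..<m}" unfolding L_def
    proof (rule prod_ge_prodinf)
      show "h has_prod prodinf h" using ch by (rule convergent_prod_has_prod)
      show "0 \<le> h i" for i using hpos[of i] by simp
      show "h i \<le> 1" for i by (rule h1)
    qed
    also have "\<dots> \<le> (\<Prod>k<m. norm (1 - t * t ^ k))"
    proof (rule prod_mono, safe)
      fix k show "0 \<le> h k" using hpos less_imp_le by blast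
      have "norm (1::complex) - norm (t * t ^ k) \<le> norm (1 - t * t ^ k)" by (rule norm_triangle_ineq2)
      thus "h k \<le> norm (1 - t * t ^ k)" by (simp add: h_def r_def norm_mult norm_power)
    qed
    also have "\<dots> = norm (fin t t m)" unfolding fin_def by (rule prod_norm)
    finally show "L \<le> norm (fin t t m)" .
    have "norm (fin t t m) = (\<Prod>k<m. norm (1 - t * t ^ k))" unfolding fin_def by (rule prod_norm[symmetric])
    also have "\<dots> \<le> prod g {..<m}"
    proof (rule prod_mono, safe)
      fix k show "0 \<le> norm (1 - t * t ^ k)" by simp
      have "norm (1 - t * t ^ k) \<le> norm (1::complex) + norm (t * t ^ k)" by (rule norm_triangle_ineq4)
      thus "norm (1 - t * t ^ k) \<le> g k" by (simp add: g_def r_def norm_mult norm_power)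
    qed
    also have "\<dots> \<le> U" unfolding U_def
    proof (rule prod_le_prodinf)
      show "g has_prod prodinf g" using cg by (rule convergent_prod_has_prod)
      show "0 \<le> g i" for i using g1[of i] by simp
      show "1 \<le> g i" for i by (rule g1)
    qed
    finally show "norm (fin t t m) \<le> U" .
  qed
  thus ?thesis using L0 by blast
qed

lemma gb_eq: "norm t < 1 \<Longrightarrow> k \<le> N \<Longrightarrow> gb t N k = fin t t N / (fin t t k * fin t t (N - k))"
  using gb_closed[of k N t] fin_tt_nz[of t] by (simp add: field_simps)

lemma gb_bound:
  assumes "norm t < 1"
  shows "\<exists>B. \<forall>N k. norm (gb t N k) \<le> B"
proof -
  obtain L U where LU: "0 < L" "\<And>m. L \<le> norm (fin t t m)" "\<And>m. norm (fin t t m) \<le> U"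
    using fin_bounds[OF assms] by blast
  have "norm (gb t N k) \<le> U / (L * L)" for N k
  proof (cases "k \<le> N")
    case True
    have "norm (gb t N k) = norm (fin t t N) / (norm (fin t t k) * norm (fin t t (N - k)))"
      using gb_eq[OF assms True] by (simp add: norm_mult norm_divide)
    also have "\<dots> \<le> U / (L * L)"
    proof (rule frac_le)
      show "0 \<le> U" using LU(3)[of 0] norm_ge_zero order_trans by blast
      show "norm (fin t t N) \<le> U" by (rule LU(3))
      show "0 < L * L" using LU(1) by simp
      show "L * L \<le> norm (fin t t k) * norm (fin t t (N - k))"
        using LU(1,2) by (intro mult_mono) (auto intro: less_imp_le)
    qed
    finally show ?thesis .
  next
    case False
    have "0 \<le> U" using LU(3)[of 0] by simp
    thus ?thesis using False LU by (simp add: gb_zero)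
  qed
  thus ?thesis by blast
qed

lemma gb_lim1:
  assumes "norm t < 1"
  shows "(\<lambda>N. gb t N j) \<longlonglongrightarrow> 1 / fin t t j"
proof -
  have nz: "qpochinf t t \<noteq> 0" using qp_tt_nz[OF assms] .
  have l: "(\<lambda>N. fin t t (N - j)) \<longlonglongrightarrow> qpochinf t t"
    using filterlim_compose[OF qp_lim[OF assms] filterlim_minus_const_nat_at_top] .
  have "(\<lambda>N. fin t t N / (fin t t j * fin t t (N - j))) \<longlonglongrightarrow> qpochinf t t / (fin t t j * qpochinf t t)"
  proof (rule tendsto_divide)
    show "(\<lambda>N. fin t t j * fin t t (N - j)) \<longlonglongrightarrow> fin t t j * qpochinf t t"
      by (rule tendsto_mult[OF tendsto_const l])
    show "fin t t j * qpochinf t t \<noteq> 0" using nz fin_tt_nz[OF assms] by simp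
  qed (rule qp_lim[OF assms])
  moreover have "qpochinf t t / (fin t t j * qpochinf t t) = 1 / fin t t j" using nz by simp
  ultimately have L: "(\<lambda>N. fin t t N / (fin t t j * fin t t (N - j))) \<longlonglongrightarrow> 1 / fin t t j" by simp
  have "eventually (\<lambda>N. fin t t N / (fin t t j * fin t t (N - j)) = gb t N j) sequentially"
    using eventually_ge_at_top[of j] by eventually_elim (rule gb_eq[OF assms, symmetric])
  with L show ?thesis by (rule Lim_transform_eventually)
qed

lemma gb_lim2_aux:
  assumes "norm t < 1"
  shows "(\<lambda>n. fin t t (2 * n) / (fin t t (n + j) * fin t t (n - j))) \<longlonglongrightarrow> 1 / qpochinf t t"
proof -
  have nz: "qpochinf t t \<noteq> 0" using qp_tt_nz[OF assms] .
  have l1: "(\<lambda>n. fin t t (n - j)) \<longlonglongrightarrow> qpochinf t t"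
    using filterlim_compose[OF qp_lim[OF assms] filterlim_minus_const_nat_at_top] .
  have l2: "(\<lambda>n. fin t t (n + j)) \<longlonglongrightarrow> qpochinf t t"
    using filterlim_compose[OF qp_lim[OF assms] filterlim_add_const_nat_at_top] .
  have l3: "(\<lambda>n. fin t t (2 * n)) \<longlonglongrightarrow> qpochinf t t"
    using filterlim_compose[OF qp_lim[OF assms] mult_nat_left_at_top[of 2]] by simp
  have "(\<lambda>n. fin t t (2 * n) / (fin t t (n + j) * fin t t (n - j))) \<longlonglongrightarrow> qpochinf t t / (qpochinf t t * qpochinf t t)"
  proof (rule tendsto_divide[OF l3 tendsto_mult[OF l2 l1]])
    show "qpochinf t t * qpochinf t t \<noteq> 0" using nz by simp
  qed
  thus ?thesis using nz by simp
qed

lemma gb_lim2: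
  assumes "norm t < 1"
  shows "(\<lambda>n. gb t (2 * n) (n + j)) \<longlonglongrightarrow> 1 / qpochinf t t"
    and "(\<lambda>n. gb t (2 * n) (n - j)) \<longlonglongrightarrow> 1 / qpochinf t t"
proof -
  note L = gb_lim2_aux[OF assms, of j]
  have "eventually (\<lambda>n. fin t t (2 * n) / (fin t t (n + j) * fin t t (n - j)) = gb t (2 * n) (n + j)) sequentially"
    using eventually_ge_at_top[of j]
  proof eventually_elim
    case (elim n)
    have "gb t (2 * n) (n + j) = fin t t (2 * n) / (fin t t (n + j) * fin t t (2 * n - (n + j)))"
      using elim by (intro gb_eq[OF assms]) simp
    also have "2 * n - (n + j) = n - j" by simp
    finally show ?case by simp
  qed
  with L show "(\<lambda>n. gb t (2 * n) (n + j)) \<longlonglongrightarrow> 1 / qpochinf t t" by (rule Lim_transform_eventually)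
  have "eventually (\<lambda>n. fin t t (2 * n) / (fin t t (n + j) * fin t t (n - j)) = gb t (2 * n) (n - j)) sequentially"
    using eventually_ge_at_top[of j]
  proof eventually_elim
    case (elim n)
    have "gb t (2 * n) (n - j) = fin t t (2 * n) / (fin t t (n - j) * fin t t (2 * n - (n - j)))"
      by (intro gb_eq[OF assms]) simp
    also have "2 * n - (n - j) = n + j" using elim by simp
    finally show ?case by (simp add: mult.commute)
  qed
  with L show "(\<lambda>n. gb t (2 * n) (n - j)) \<longlonglongrightarrow> 1 / qpochinf t t" by (rule Lim_transform_eventually)
qed



lemma norm_tri_le: "norm (t::complex) < 1 \<Longrightarrow> norm (t ^ n) \<le> 1"
  by (simp add: norm_power power_le_one)

lemma E2:
  assumes t: "norm t < 1" and w: "norm w < 1"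
  shows "(\<lambda>j. t ^ tri j * w ^ j / fin t t j) sums qpochinf (-w) t"
    and "summable (\<lambda>j. norm (t ^ tri j * w ^ j / fin t t j))"
proof -
  obtain B where B: "\<And>N k. norm (gb t N k) \<le> B" using gb_bound[OF t] by blast
  have B0: "0 \<le> B" using B[of 0 0] by (meson norm_ge_zero order_trans)
  define a where "a j N = gb t N j * t ^ tri j * w ^ j" for j N
  define b where "b j = t ^ tri j * w ^ j / fin t t j" for j
  have lim: "(\<lambda>N. a j N) \<longlonglongrightarrow> b j" for j
  proof -
    have "(\<lambda>N. a j N) \<longlonglongrightarrow> 1 / fin t t j * t ^ tri j * w ^ j"
      unfolding a_def by (intro tendsto_mult[OF tendsto_mult[OF gb_lim1[OF t] tendsto_const] tendsto_const])
    thus ?thesis by (simp add: b_def)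
  qed
  have bnd: "eventually (\<lambda>(k,n). norm (a k n) \<le> B * norm w ^ k) (at_top \<times>\<^sub>F sequentially)"
  proof (rule always_eventually, clarify)
    fix k n
    have "norm (a k n) = norm (gb t n k) * norm (t ^ tri k) * norm w ^ k"
      by (simp add: a_def norm_mult norm_power)
    also have "\<dots> \<le> B * 1 * norm w ^ k"
      using B norm_tri_le[OF t] B0 by (intro mult_mono) auto
    finally show "norm (a k n) \<le> B * norm w ^ k" by simp
  qed
  have sm: "summable (\<lambda>k. B * norm w ^ k)" using w by (intro summable_mult summable_geometric) auto
  note T = tannerys_theorem[OF lim bnd sm trivial_limit_sequentially]
  have fe: "(\<Sum>j. a j N) = fin (-w) t N" for N
  proof -
    have "(\<Sum>j. a j N) = (\<Sum>j\<le>N. a j N)"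
      by (rule suminf_finite) (auto simp: a_def gb_zero)
    thus ?thesis by (simp add: qbinom_finite a_def)
  qed
  have "(\<lambda>N. fin (-w) t N) \<longlonglongrightarrow> suminf b" using T fe by simp
  hence "suminf b = qpochinf (-w) t" using qp_lim[OF t] LIMSEQ_unique by blast
  moreover have "summable (\<lambda>j. norm (b j))" using T by simp
  ultimately show "b sums qpochinf (-w) t" "summable (\<lambda>j. norm (b j))"
    using summable_norm_cancel summable_sums by (metis, blast)
qed

definition G :: "complex \<Rightarrow> complex \<Rightarrow> complex" where
  "G t z = (\<Sum>k. z ^ k / fin t t k)"

lemma G_summable:
  assumes t: "norm t < 1" and z: "norm z < 1"
  shows "summable (\<lambda>k. norm (z ^ k / fin t t k))"
proof -
  obtain L U where LU: "0 < L" "\<And>m. L \<le> norm (fin t t m)" "\<And>m. norm (fin t t m) \<le> U"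
    using fin_bounds[OF t] by blast
  have "norm (z ^ k / fin t t k) \<le> norm z ^ k / L" for k
    using LU by (simp add: norm_divide norm_power frac_le)
  moreover have "summable (\<lambda>k. norm z ^ k / L)" using z by (intro summable_divide summable_geometric) auto
  ultimately show ?thesis using summable_comparison_test'[of "\<lambda>k. norm z ^ k / L" 0 "\<lambda>k. norm (z ^ k / fin t t k)"] by simp
qed

lemma cauchy_lemma:
  assumes t: "norm t < 1" and z: "norm z < 1" and xz: "norm (x * z) < 1"
  shows "(\<lambda>m. fin (-x) t m / fin t t m * z ^ m) sums (qpochinf (-(x * z)) t * G t z)"
proof -
  define a where "a = (\<lambda>j. t ^ tri j * (x * z) ^ j / fin t t j)"
  define b where "b = (\<lambda>k. z ^ k / fin t t k)"
  have "(\<lambda>m. \<Sum>i\<le>m. a i * b (m - i)) sums (suminf a * suminf b)"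
    using E2(2)[OF t xz] G_summable[OF t z] unfolding a_def b_def by (rule Cauchy_product_sums)
  moreover have "suminf a = qpochinf (-(x * z)) t" using E2(1)[OF t xz] unfolding a_def by (rule sums_unique[symmetric])
  moreover have "suminf b = G t z" by (simp add: b_def G_def)
  moreover have "(\<Sum>i\<le>m. a i * b (m - i)) = fin (-x) t m / fin t t m * z ^ m" for m
  proof -
    have "(\<Sum>i\<le>m. a i * b (m - i)) = (\<Sum>i\<le>m. gb t m i * t ^ tri i * x ^ i) / fin t t m * z ^ m"
      unfolding sum_divide_distrib sum_distrib_right
    proof (rule sum.cong[OF refl])
      fix i assume "i \<in> {..m}"
      hence im: "i \<le> m" by simp
      have zz: "z ^ i * z ^ (m - i) = z ^ m" using im by (simp flip: power_add)
      show "a i * b (m - i) = gb t m i * t ^ tri i * x ^ i / fin t t m * z ^ m"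
        unfolding a_def b_def gb_eq[OF t im] using fin_tt_nz[OF t] zz
        by (simp add: field_simps power_mult_distrib)
    qed
    thus ?thesis by (simp add: qbinom_finite)
  qed
  ultimately show ?thesis by simp
qed

lemma G_inv:
  assumes t: "norm t < 1" and z: "norm z < 1"
  shows "qpochinf z t * G t z = 1"
proof -
  have "(\<lambda>m. fin (-(-1)) t m / fin t t m * z ^ m) sums (qpochinf (-((-1) * z)) t * G t z)"
    using z by (intro cauchy_lemma t) auto
  moreover have "fin (-(-1)) t m / fin t t m * z ^ m = (if m = 0 then 1 else 0)" for m
  proof (cases m)
    case (Suc m') thus ?thesis by (simp add: fin_Suc')
  qed simp
  ultimately have "(\<lambda>m. if m = 0 then 1 else 0) sums (qpochinf z t * G t z)" by simp
  moreover have "(\<lambda>m. if m = 0 then 1 else 0 :: complex) sums 1"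
    using sums_single[of 0 "\<lambda>_. 1::complex"] by simp
  ultimately show ?thesis using sums_unique2 by metis
qed

lemma qbinom_m1:
  assumes t: "norm t < 1" and z: "norm z < 1"
  shows "(\<lambda>m. fin (-1) t m / fin t t m * z ^ m) sums (qpochinf (-z) t / qpochinf z t)"
proof -
  have "(\<lambda>m. fin (-1) t m / fin t t m * z ^ m) sums (qpochinf (-(1 * z)) t * G t z)"
    using z by (intro cauchy_lemma t) auto
  moreover have "qpochinf z t \<noteq> 0" using G_inv[OF t z] by auto
  hence "G t z = 1 / qpochinf z t" using G_inv[OF t z] by (simp add: field_simps)
  ultimately show ?thesis by simp
qed



lemma tri_sq: "2 * tri k + k = k * k"
  by (induction k) (simp_all add: algebra_simps)

lemma sum_sym_split:
  fixes c :: "nat \<Rightarrow> complex"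
  shows "(\<Sum>k\<le>2*n. c k) = (\<Sum>j\<le>n. if j = 0 then c n else c (n + j) + c (n - j))"
proof -
  have U: "{..2*n} = {..<n} \<union> {n..2*n}" by auto
  have "(\<Sum>k\<le>2*n. c k) = (\<Sum>k<n. c k) + (\<Sum>k\<in>{n..2*n}. c k)"
    unfolding U by (rule sum.union_disjoint) auto
  also have "(\<Sum>k\<in>{n..2*n}. c k) = (\<Sum>j\<le>n. c (n + j))"
  proof -
    have "(\<Sum>k\<in>{0+n..n+n}. c k) = (\<Sum>j\<in>{0..n}. c (j + n))" by (rule sum.shift_bounds_cl_nat_ivl)
    thus ?thesis by (simp add: mult_2 atLeast0AtMost add.commute)
  qed
  also have "(\<Sum>k<n. c k) = (\<Sum>j\<le>n. if j = 0 then 0 else c (n - j))"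
  proof (cases n)
    case 0 thus ?thesis by simp
  next
    case (Suc m)
    have "(\<Sum>j\<le>n. if j = 0 then 0 else c (n - j)) = (\<Sum>j\<le>m. c (n - Suc j))"
      unfolding Suc by (subst sum.atMost_Suc_shift) simp
    also have "\<dots> = (\<Sum>j<n. c (n - Suc j))" by (simp add: Suc lessThan_Suc_atMost)
    also have "\<dots> = (\<Sum>k<n. c k)" by (rule sum.nat_diff_reindex)
    finally show ?thesis by simp
  qed
  finally have E: "(\<Sum>k\<le>2*n. c k) = (\<Sum>j\<le>n. if j = 0 then 0 else c (n - j)) + (\<Sum>j\<le>n. c (n + j))" .
  show ?thesis unfolding E sum.distrib[symmetric] by (rule sum.cong) auto
qed

lemma prod_odd_pow: "(\<Prod>i<n. (q::complex) ^ (2 * i + 1)) = q ^ (n * n)"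
proof (induction n)
  case (Suc n)
  have "(\<Prod>i<Suc n. q ^ (2 * i + 1)) = q ^ (n * n) * q ^ (2 * n + 1)" using Suc by simp
  also have "\<dots> = q ^ (n * n + (2 * n + 1))" by (simp add: power_add)
  also have "n * n + (2 * n + 1) = Suc n * Suc n" by simp
  finally show ?case .
qed simp

lemma fin_add: "fin a t (m + n) = fin a t m * fin (a * t ^ m) t n"
  by (induction n) (simp_all add: fin_Suc power_add mult_ac)

lemma fin_sym:
  fixes q :: complex
  assumes q: "q \<noteq> 0"
  shows "q ^ (n * n) * fin (-(q / q ^ (2 * n))) (q^2) (2 * n) = fin (-q) (q^2) n ^ 2"
proof -
  define x where "x = q / q ^ (2 * n)"
  have xt: "-x * (q^2) ^ n = -q" using q by (simp add: x_def power_mult)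
  have "fin (-x) (q^2) (2 * n) = fin (-x) (q^2) n * fin (-q) (q^2) n"
    unfolding mult_2 fin_add xt ..
  moreover have "q ^ (n * n) * fin (-x) (q^2) n = fin (-q) (q^2) n"
  proof -
    have "fin (-x) (q^2) n = (\<Prod>i<n. 1 + x * (q^2) ^ (n - Suc i))"
      unfolding fin_def by (subst prod.nat_diff_reindex[symmetric]) simp
    hence "q ^ (n * n) * fin (-x) (q^2) n = (\<Prod>i<n. q ^ (2 * i + 1) * (1 + x * (q^2) ^ (n - Suc i)))"
      by (simp add: prod_odd_pow[symmetric] prod.distrib)
    also have "\<dots> = (\<Prod>i<n. 1 - (-q) * (q^2) ^ i)"
    proof (rule prod.cong[OF refl])
      fix i assume "i \<in> {..<n}"
      then obtain e where e: "n = e + i + 1" by (metis lessThan_iff less_imp_Suc_add add.commute add_Suc_right Suc_eq_plus1 add.assoc)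
      have "n - Suc i = e" using e by simp
      moreover have "q ^ (2 * n) = q ^ (2 * e) * q ^ (2 * i + 1) * q" unfolding e by (simp add: algebra_simps power_add)
      moreover have pe: "(q^2) ^ e = q ^ (2 * e)" by (simp add: power_mult)
      ultimately have "x * (q^2) ^ (n - Suc i) * q ^ (2 * i + 1) = (q ^ (2 * e) * q ^ (2 * i + 1) * q) / q ^ (2 * n)"
        unfolding pe \<open>n - Suc i = e\<close> by (simp add: x_def mult_ac)
      also have "\<dots> = 1" using q \<open>q ^ (2 * n) = _\<close> by simp
      finally have h: "x * (q^2) ^ (n - Suc i) * q ^ (2 * i + 1) = 1" .
      have "q ^ (2 * i + 1) * (1 + x * (q^2) ^ (n - Suc i)) = q ^ (2 * i + 1) + x * (q^2) ^ (n - Suc i) * q ^ (2 * i + 1)"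
        by (simp add: algebra_simps)
      also have "\<dots> = 1 - (-q) * (q^2) ^ i" unfolding h by (simp add: power_mult)
      finally show "q ^ (2 * i + 1) * (1 + x * (q^2) ^ (n - Suc i)) = 1 - (-q) * (q^2) ^ i" .
    qed
    finally show ?thesis by (simp add: fin_def)
  qed
  ultimately show ?thesis by (simp add: x_def power2_eq_square mult_ac)
qed



lemma expo_eq:
  fixes q :: complex
  assumes q: "q \<noteq> 0" and e: "n * n + k * k = 2 * n * k + j * j"
  shows "q ^ (n * n) * (q^2) ^ tri k * (q / q ^ (2 * n)) ^ k = q ^ (j * j)"
proof -
  have "(q^2) ^ tri k * q ^ k = q ^ (k * k)"
    by (simp add: power_mult[symmetric] power_add[symmetric] tri_sq)
  hence "q ^ (n * n) * (q^2) ^ tri k * (q / q ^ (2 * n)) ^ k = q ^ (n * n + k * k) / q ^ (2 * n * k)"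
    by (simp add: power_divide power_add power_mult[symmetric] mult_ac)
  also have "\<dots> = q ^ (2 * n * k) * q ^ (j * j) / q ^ (2 * n * k)" unfolding e power_add ..
  also have "\<dots> = q ^ (j * j)" using q by simp
  finally show ?thesis .
qed

lemma jtp_finite:
  fixes q :: complex
  assumes q: "q \<noteq> 0"
  shows "fin (-q) (q^2) n ^ 2 = (\<Sum>j\<le>n. if j = 0 then gb (q^2) (2 * n) n
            else (gb (q^2) (2 * n) (n + j) + gb (q^2) (2 * n) (n - j)) * q ^ (j * j))"
proof -
  define x where "x = q / q ^ (2 * n)"
  define c where "c k = gb (q^2) (2 * n) k * (q ^ (n * n) * (q^2) ^ tri k * x ^ k)" for k
  have "fin (-q) (q^2) n ^ 2 = q ^ (n * n) * fin (-x) (q^2) (2 * n)"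
    using fin_sym[OF q, of n] by (simp add: x_def)
  also have "\<dots> = (\<Sum>k\<le>2*n. c k)"
    by (simp add: qbinom_finite c_def sum_distrib_left mult_ac)
  also have "\<dots> = (\<Sum>j\<le>n. if j = 0 then c n else c (n + j) + c (n - j))"
    by (rule sum_sym_split)
  also have "\<dots> = (\<Sum>j\<le>n. if j = 0 then gb (q^2) (2 * n) n
            else (gb (q^2) (2 * n) (n + j) + gb (q^2) (2 * n) (n - j)) * q ^ (j * j))"
  proof (rule sum.cong[OF refl])
    fix j assume "j \<in> {..n}"
    hence jn: "j \<le> n" by simp
    have a1: "n * n + (n + j) * (n + j) = 2 * n * (n + j) + j * j" by (simp add: algebra_simps)
    have c1: "c (n + j) = gb (q^2) (2 * n) (n + j) * q ^ (j * j)"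
      unfolding c_def x_def expo_eq[OF q a1] ..
    have c2: "c (n - j) = gb (q^2) (2 * n) (n - j) * q ^ (j * j)"
    proof -
      define k where "k = n - j"
      have k: "n = k + j" using jn by (simp add: k_def)
      have a2: "n * n + (n - j) * (n - j) = 2 * n * (n - j) + j * j" unfolding k by (simp add: algebra_simps)
      show ?thesis unfolding c_def x_def expo_eq[OF q a2] ..
    qed
    have a0: "n * n + n * n = 2 * n * n + 0 * 0" by simp
    have c0: "c n = gb (q^2) (2 * n) n"
      unfolding c_def x_def expo_eq[OF q a0] by simp
    show "(if j = 0 then c n else c (n + j) + c (n - j)) = (if j = 0 then gb (q^2) (2 * n) n
            else (gb (q^2) (2 * n) (n + j) + gb (q^2) (2 * n) (n - j)) * q ^ (j * j))"
      using c0 c1 c2 by (simp add: algebra_simps)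
  qed
  finally show ?thesis .
qed

lemma pow_sq_le:
  fixes q :: complex
  assumes "norm q < 1"
  shows "norm (q ^ (j * j)) \<le> norm q ^ j"
proof (cases "j = 0")
  case False
  hence "j \<le> j * j" by simp
  thus ?thesis using assms by (simp add: norm_power power_decreasing)
qed simp

lemma th_summable:
  fixes q :: complex
  assumes "norm q < 1"
  shows "summable (\<lambda>n. norm (q ^ ((Suc n)^2)))"
proof -
  show ?thesis
  proof (rule summable_comparison_test'[where N=0])
    show "norm (norm (q ^ ((Suc n)^2))) \<le> norm q ^ (Suc n)" for n
      using pow_sq_le[OF assms, of "Suc n"] by (simp add: power2_eq_square)
    show "summable (\<lambda>n. norm q ^ (Suc n))" using assms by (simp add: summable_geometric)
  qed
qed

lemma jtp:
  fixes q :: complex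
  assumes qn: "norm q < 1"
  shows "1 + 2 * (\<Sum>n. q ^ ((Suc n)^2)) = qpochinf (q^2) (q^2) * qpochinf (-q) (q^2) ^ 2"
proof (cases "q = 0")
  case True
  have "qpochinf 0 0 = 1" unfolding qpochinf_def by simp
  moreover have "(\<lambda>n. (0::complex) ^ ((Suc n)^2)) = (\<lambda>n. 0)" by (simp add: fun_eq_iff power2_eq_square)
  ultimately show ?thesis using True by simp
next
  case q: False
  define t where "t = q^2"
  have t: "norm t < 1" using qn by (simp add: t_def norm_power power_less_one_iff)
  obtain B where B: "\<And>N k. norm (gb t N k) \<le> B" using gb_bound[OF t] by blast
  have B0: "0 \<le> B" using B[of 0 0] by (meson norm_ge_zero order_trans)
  define a where "a = (\<lambda>j n. if j \<le> n then (if j = 0 then gb t (2 * n) n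
            else (gb t (2 * n) (n + j) + gb t (2 * n) (n - j)) * q ^ (j * j)) else 0)"
  define b where "b = (\<lambda>j. if j = 0 then 1 / qpochinf t t else 2 * q ^ (j * j) / qpochinf t t)"
  have lim: "(\<lambda>n. a j n) \<longlonglongrightarrow> b j" for j
  proof (cases "j = 0")
    case True
    have "(\<lambda>n. gb t (2 * n) (n + 0)) \<longlonglongrightarrow> 1 / qpochinf t t" by (rule gb_lim2(1)[OF t])
    thus ?thesis using True by (simp add: a_def b_def)
  next
    case False
    have L0: "(\<lambda>n. (gb t (2 * n) (n + j) + gb t (2 * n) (n - j)) * q ^ (j * j))
        \<longlonglongrightarrow> (1 / qpochinf t t + 1 / qpochinf t t) * q ^ (j * j)"
      by (intro tendsto_mult[OF tendsto_add[OF gb_lim2(1)[OF t] gb_lim2(2)[OF t]] tendsto_const])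
    have "(1 / qpochinf t t + 1 / qpochinf t t) * q ^ (j * j) = b j"
      using False by (simp add: b_def field_simps)
    with L0 have L: "(\<lambda>n. (gb t (2 * n) (n + j) + gb t (2 * n) (n - j)) * q ^ (j * j)) \<longlonglongrightarrow> b j" by simp
    have ev: "eventually (\<lambda>n. (gb t (2 * n) (n + j) + gb t (2 * n) (n - j)) * q ^ (j * j) = a j n) sequentially"
      using eventually_ge_at_top[of j] by eventually_elim (simp add: a_def False)
    show ?thesis using Lim_transform_eventually[OF L ev] .
  qed
  have bnd: "eventually (\<lambda>(k,n). norm (a k n) \<le> 2 * B * norm q ^ k) (at_top \<times>\<^sub>F sequentially)"
  proof (rule always_eventually, clarify)
    fix k n
    show "norm (a k n) \<le> 2 * B * norm q ^ k"
    proof (cases "k \<le> n \<and> k \<noteq> 0")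
      case True
      have "norm (a k n) \<le> (norm (gb t (2 * n) (n + k)) + norm (gb t (2 * n) (n - k))) * norm (q ^ (k * k))"
        using True by (simp add: a_def norm_mult norm_triangle_ineq mult_right_mono)
      also have "\<dots> \<le> (B + B) * norm q ^ k"
        using B B0 pow_sq_le[OF qn, of k] by (intro mult_mono add_mono) auto
      finally show ?thesis by simp
    next
      case False
      have "0 \<le> 2 * B * norm q ^ k" using B0 by simp
      moreover have "norm (gb t (2 * n) n) \<le> 2 * B * norm q ^ k" if "k = 0"
        using B[of "2 * n" n] B0 that by simp
      ultimately show ?thesis using False by (auto simp: a_def)
    qed
  qed
  have sm: "summable (\<lambda>k. 2 * B * norm q ^ k)" using qn by (intro summable_mult summable_geometric) auto
  note T = tannerys_theorem[OF lim bnd sm trivial_limit_sequentially]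
  have fe: "(\<Sum>j. a j n) = fin (-q) t n ^ 2" for n
  proof -
    have "(\<Sum>j. a j n) = (\<Sum>j\<le>n. a j n)"
      by (rule suminf_finite) (auto simp: a_def)
    also have "\<dots> = fin (-q) t n ^ 2"
      unfolding jtp_finite[OF q, of n] t_def by (rule sum.cong) (auto simp: a_def t_def)
    finally show ?thesis .
  qed
  have "(\<lambda>n. fin (-q) t n ^ 2) \<longlonglongrightarrow> suminf b" using T fe by simp
  moreover have "(\<lambda>n. fin (-q) t n ^ 2) \<longlonglongrightarrow> qpochinf (-q) t ^ 2"
    by (intro tendsto_power qp_lim t)
  ultimately have sb: "suminf b = qpochinf (-q) t ^ 2" using LIMSEQ_unique by blast
  have sumb: "summable b" using T summable_norm_cancel by blast
  have "suminf b = b 0 + (\<Sum>n. b (Suc n))" using suminf_split_head[OF sumb] by simp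
  also have "(\<Sum>n. b (Suc n)) = (\<Sum>n. 2 / qpochinf t t * q ^ ((Suc n)^2))"
    by (simp add: b_def power2_eq_square)
  also have "\<dots> = 2 / qpochinf t t * (\<Sum>n. q ^ ((Suc n)^2))"
    by (rule suminf_mult) (rule summable_norm_cancel[OF th_summable[OF qn]])
  finally have "qpochinf (-q) t ^ 2 = (1 + 2 * (\<Sum>n. q ^ ((Suc n)^2))) / qpochinf t t"
    unfolding sb by (simp add: b_def add_divide_distrib)
  thus ?thesis using qp_tt_nz[OF t] by (simp add: t_def field_simps)
qed



lemma norm_sq_lt: "norm (q::complex) < 1 \<Longrightarrow> norm (q^2) < 1"
  by (simp add: norm_power power_less_one_iff)

lemma euler_id:
  fixes t :: complex
  assumes t: "norm t < 1"
  shows "qpochinf (-t) t * qpochinf t (t^2) = 1"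
proof -
  have t2: "norm (t^2) < 1" using norm_sq_lt[OF t] .
  have "qpochinf t t * qpochinf (-t) t = qpochinf (t^2) (t^2)" by (rule qp_mult_neg[OF t])
  moreover have "qpochinf t t = qpochinf t (t^2) * qpochinf (t^2) (t^2)"
    using qp_split[OF t, of t] by (simp add: power2_eq_square)
  ultimately have "qpochinf (t^2) (t^2) * (qpochinf (-t) t * qpochinf t (t^2)) = qpochinf (t^2) (t^2) * 1"
    by (simp add: mult_ac)
  thus ?thesis using qp_tt_nz[OF t2] by simp
qed

lemma euler3:
  fixes q :: complex
  assumes q: "norm q < 1"
  shows "qpochinf (-(q^2)) (q^2) * qpochinf q (q^2) * qpochinf (-q) (q^2) = 1"
proof -
  have "qpochinf (-q) q = qpochinf (-q) (q^2) * qpochinf (-(q^2)) (q^2)"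
    using qp_split[OF q, of "-q"] by (simp add: power2_eq_square)
  with euler_id[OF q] show ?thesis by (simp add: mult_ac)
qed

lemma fin_m1_nz:
  fixes p :: complex
  assumes p: "norm p < 1"
  shows "fin (-1) p m \<noteq> 0"
proof -
  have "1 - (-1) * p ^ k \<noteq> 0" for k
  proof (cases k)
    case 0 thus ?thesis by simp
  next
    case (Suc k')
    have "norm p ^ k < 1" by (subst power_less_one_iff) (use p Suc in auto)
    hence "norm (- (p ^ k)) < 1" by (simp add: norm_power)
    hence "1 - (- (p ^ k)) \<noteq> 0" by (rule factor_nz)
    thus ?thesis by simp
  qed
  thus ?thesis unfolding fin_def by (simp add: prod_zero_iff)
qed

lemma qp_m1_nz:
  fixes p :: complex
  assumes p: "norm p < 1"
  shows "qpochinf (-1) p \<noteq> 0"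
  using qp_shift[OF p, of "-1" 0] qp_shift[OF p, of "-1" 1]
proof -
  have "1 - (-1) * p ^ k \<noteq> 0" for k
    using fin_m1_nz[OF p, of "Suc k"] by (auto simp: fin_def)
  thus ?thesis by (rule qp_nz[OF p])
qed

lemma term_eq:
  fixes q :: complex
  assumes q: "norm q < 1"
  defines "p \<equiv> q^2"
  shows "q ^ m * qpochinf (- (q ^ (m + 1))) q * qpochinf (q ^ (m + 1)) q
      / (qpochinf (\<i> * q ^ m) q * qpochinf (inverse \<i> * q ^ m) q)
    = qpochinf p p / qpochinf (-1) p * (fin (-1) p m / fin p p m * q ^ m)"
proof -
  have p: "norm p < 1" unfolding p_def by (rule norm_sq_lt[OF q])
  have e1: "(- (q ^ (m + 1)))^2 = p ^ (m + 1)"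
    unfolding p_def power2_eq_square by (simp add: power_mult_distrib)
  have e2: "(\<i> * q ^ m)^2 = -(p ^ m)"
  proof -
    have "(\<i> * q ^ m)^2 = \<i>^2 * (q ^ m)^2" by (rule power_mult_distrib)
    also have "\<dots> = -(p ^ m)" by (simp add: p_def power_mult[symmetric] mult.commute)
    finally show ?thesis .
  qed
  have N: "qpochinf (- (q ^ (m + 1))) q * qpochinf (q ^ (m + 1)) q = qpochinf (p ^ (m + 1)) p"
    using qp_mult_neg[OF q, of "- (q ^ (m + 1))"] unfolding e1 by (simp add: p_def)
  have D: "qpochinf (\<i> * q ^ m) q * qpochinf (inverse \<i> * q ^ m) q = qpochinf (-(p ^ m)) p"
    using qp_mult_neg[OF q, of "\<i> * q ^ m"] unfolding e2 by (simp add: p_def)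
  have N2: "qpochinf (p ^ (m + 1)) p = qpochinf p p / fin p p m"
    using qp_shift[OF p, of p m] fin_tt_nz[OF p, of m] by (simp add: field_simps)
  have D2: "qpochinf (-(p ^ m)) p = qpochinf (-1) p / fin (-1) p m"
    using qp_shift[OF p, of "-1" m] fin_m1_nz[OF p, of m] by (simp add: field_simps)
  have "q ^ m * qpochinf (- (q ^ (m + 1))) q * qpochinf (q ^ (m + 1)) q
      / (qpochinf (\<i> * q ^ m) q * qpochinf (inverse \<i> * q ^ m) q)
      = q ^ m * (qpochinf (- (q ^ (m + 1))) q * qpochinf (q ^ (m + 1)) q)
      / (qpochinf (\<i> * q ^ m) q * qpochinf (inverse \<i> * q ^ m) q)" by (simp only: mult.assoc)
  also have "\<dots> = q ^ m * qpochinf (p ^ (m + 1)) p / qpochinf (-(p ^ m)) p" unfolding N D ..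
  also have "\<dots> = qpochinf p p / qpochinf (-1) p * (fin (-1) p m / fin p p m * q ^ m)"
    unfolding N2 D2
    using fin_m1_nz[OF p, of m] fin_tt_nz[OF p, of m] qp_m1_nz[OF p]
    by (simp add: field_simps)
  finally show ?thesis .
qed



lemma sums_even_odd:
  fixes f :: "nat \<Rightarrow> complex"
  assumes s: "f sums s" and s': "(\<lambda>m. (-1) ^ m * f m) sums s'"
  shows "(\<lambda>n. f (2 * n)) sums ((s + s') / 2)" and "(\<lambda>n. f (2 * n + 1)) sums ((s - s') / 2)"
proof -
  define g where "g = (\<lambda>m. (f m + (-1) ^ m * f m) / 2)"
  define h where "h = (\<lambda>m. (f m - (-1) ^ m * f m) / 2)"
  have gs: "g sums ((s + s') / 2)" unfolding g_def by (intro sums_divide sums_add s s')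
  have hs: "h sums ((s - s') / 2)" unfolding h_def by (intro sums_divide sums_diff s s')
  have "(\<lambda>n. g (2 * n)) sums ((s + s') / 2)"
  proof (subst sums_mono_reindex)
    show "strict_mono (\<lambda>n::nat. 2 * n)" by (simp add: strict_mono_def)
    show "g n = 0" if "n \<notin> range (\<lambda>n::nat. 2 * n)" for n
    proof -
      have "odd n" using that by (metis evenE rangeI)
      thus ?thesis by (simp add: g_def)
    qed
  qed (rule gs)
  thus "(\<lambda>n. f (2 * n)) sums ((s + s') / 2)" by (simp add: g_def)
  have "(\<lambda>n. h (2 * n + 1)) sums ((s - s') / 2)"
  proof (subst sums_mono_reindex)
    show "strict_mono (\<lambda>n::nat. 2 * n + 1)" by (simp add: strict_mono_def)
    show "h n = 0" if "n \<notin> range (\<lambda>n::nat. 2 * n + 1)" for n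
    proof -
      have "even n" using that by (metis oddE rangeI)
      thus ?thesis by (simp add: h_def)
    qed
  qed (rule hs)
  thus "(\<lambda>n. f (2 * n + 1)) sums ((s - s') / 2)" by (simp add: h_def)
qed

lemma neg1_sq: "(-1::complex) ^ (k * k) = (-1) ^ k"
  by (simp add: minus_one_power_iff)

definition th :: "complex \<Rightarrow> complex" where
  "th x = (\<Sum>n. x ^ ((Suc n)^2))"

lemma th_sums: assumes "norm x < 1" shows "(\<lambda>n. x ^ ((Suc n)^2)) sums th x"
  unfolding th_def by (rule summable_sums[OF summable_norm_cancel[OF th_summable[OF assms]]])

theorem theorem2p15:
  fixes q :: complex
  assumes "norm q < 1"
  shows "Sbar \<i> q = (\<Sum>n. q ^ ((Suc n)\<^sup>2)) - (\<Sum>n. (-1) ^ Suc n * q ^ (2 * (Suc n)\<^sup>2))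
    \<and> Sbar1 \<i> q = (\<Sum>n. q ^ ((2 * Suc n - 1)\<^sup>2))
    \<and> Sbar2 \<i> q = (\<Sum>n. q ^ ((2 * Suc n)\<^sup>2)) - (\<Sum>n. (-1) ^ Suc n * q ^ (2 * (Suc n)\<^sup>2))"
proof -
  note q = assms
  define p where "p = q^2"
  have p: "norm p < 1" unfolding p_def by (rule norm_sq_lt[OF q])
  have pp: "norm (p^2) < 1" by (rule norm_sq_lt[OF p])
  define C where "C = qpochinf p p / qpochinf (-1) p"
  define U where "U = (\<lambda>m. fin (-1) p m / fin p p m * q ^ m)"
  define R where "R = qpochinf (-q) p / qpochinf q p"
  define R' where "R' = qpochinf q p / qpochinf (-q) p"
  have U0: "U 0 = 1" by (simp add: U_def)
  have Us: "U sums R" unfolding U_def R_def by (rule qbinom_m1[OF p q])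
  have Ums: "(\<lambda>m. (-1) ^ m * U m) sums R'"
  proof -
    have "norm (-q) < 1" using q by simp
    from qbinom_m1[OF p this] show ?thesis
      by (simp add: U_def R'_def power_minus' mult_ac)
  qed
  have P0: "qpochinf (-1) p = 2 * qpochinf (-p) p"
    using qp_shift[OF p, of "-1" 1] by (simp add: fin_def)
  have E3: "qpochinf (-p) p * qpochinf q p * qpochinf (-q) p = 1"
    using euler3[OF q] by (simp add: p_def)
  have Jq: "1 + 2 * th q = qpochinf p p * qpochinf (-q) p ^ 2"
    using jtp[OF q] by (simp add: th_def p_def)
  have Jmq: "1 + 2 * th (-q) = qpochinf p p * qpochinf q p ^ 2"
  proof -
    have "norm (-q) < 1" using q by simp
    from jtp[OF this] show ?thesis by (simp add: th_def p_def)
  qed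
  have Jmp: "1 + 2 * th (-p) = qpochinf (p^2) (p^2) * qpochinf p (p^2) ^ 2"
  proof -
    have "norm (-p) < 1" using p by simp
    from jtp[OF this] show ?thesis by (simp add: th_def)
  qed
  have Eup: "qpochinf (-p) p * qpochinf p (p^2) = 1" by (rule euler_id[OF p])
  have Spp: "qpochinf p p = qpochinf p (p^2) * qpochinf (p^2) (p^2)"
    using qp_split[OF p, of p] by (simp add: power2_eq_square)
  have nz1: "qpochinf (-p) p \<noteq> 0" "qpochinf q p \<noteq> 0" "qpochinf (-q) p \<noteq> 0"
    using E3 by auto
  have CR: "C * R = (1 + 2 * th q) / 2"
  proof -
    have "C * R = qpochinf p p * qpochinf (-q) p / (2 * (qpochinf (-p) p * qpochinf q p))"
      by (simp add: C_def R_def P0 field_simps)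
    also have "qpochinf (-p) p * qpochinf q p = 1 / qpochinf (-q) p"
      using E3 nz1 by (simp add: field_simps)
    finally show ?thesis unfolding Jq by (simp add: power2_eq_square)
  qed
  have CR': "C * R' = (1 + 2 * th (-q)) / 2"
  proof -
    have "C * R' = qpochinf p p * qpochinf q p / (2 * (qpochinf (-p) p * qpochinf (-q) p))"
      by (simp add: C_def R'_def P0 field_simps)
    also have "qpochinf (-p) p * qpochinf (-q) p = 1 / qpochinf q p"
      using E3 nz1 by (simp add: field_simps)
    finally show ?thesis unfolding Jmq by (simp add: power2_eq_square)
  qed
  have CC: "C = (1 + 2 * th (-p)) / 2"
  proof -
    have "C = qpochinf p p / (2 * qpochinf (-p) p)" by (simp add: C_def P0)
    also have "qpochinf (-p) p = 1 / qpochinf p (p^2)"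
    proof -
      have "qpochinf p (p^2) \<noteq> 0" using Eup by auto
      thus ?thesis using Eup by (simp add: eq_divide_eq)
    qed
    finally show ?thesis unfolding Jmp Spp by (simp add: power2_eq_square)
  qed
  have TE: "q ^ m * qpochinf (- (q ^ (m + 1))) q * qpochinf (q ^ (m + 1)) q
      / (qpochinf (\<i> * q ^ m) q * qpochinf (inverse \<i> * q ^ m) q) = C * U m" for m
    using term_eq[OF q, of m, folded p_def] by (simp add: C_def U_def)
  have S0: "Sbar \<i> q = C * (R - 1)"
  proof -
    have "(\<lambda>n. U (Suc n)) sums (R - 1)" using Us U0 by (simp add: sums_Suc_iff)
    hence "(\<lambda>n. C * U (Suc n)) sums (C * (R - 1))" by (rule sums_mult)
    moreover have "Sbar \<i> q = (\<Sum>n. C * U (Suc n))" unfolding Sbar_def Let_def TE ..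
    ultimately show ?thesis by (simp add: sums_iff)
  qed
  note EO = sums_even_odd[OF Us Ums]
  have S1: "Sbar1 \<i> q = C * ((R - R') / 2)"
  proof -
    have "(\<lambda>n. C * U (2 * n + 1)) sums (C * ((R - R') / 2))" by (rule sums_mult[OF EO(2)])
    moreover have "Sbar1 \<i> q = (\<Sum>n. C * U (2 * n + 1))" unfolding Sbar1_def Let_def TE ..
    ultimately show ?thesis by (simp add: sums_iff)
  qed
  have S2: "Sbar2 \<i> q = C * ((R + R') / 2 - 1)"
  proof -
    have "(\<lambda>n. U (2 * Suc n)) sums ((R + R') / 2 - 1)"
      using EO(1) U0 sums_Suc_iff[of "\<lambda>n. U (2 * n)"] by simp
    hence "(\<lambda>n. C * U (2 * Suc n)) sums (C * ((R + R') / 2 - 1))" by (rule sums_mult)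
    moreover have "Sbar2 \<i> q = (\<Sum>n. C * U (2 * Suc n))" unfolding Sbar2_def Let_def TE ..
    ultimately show ?thesis by (simp add: sums_iff)
  qed
  have T1: "(\<Sum>n. q ^ ((Suc n)\<^sup>2)) = th q" by (simp add: th_def)
  have T2: "(\<Sum>n. (-1) ^ Suc n * q ^ (2 * (Suc n)\<^sup>2)) = th (-p)"
  proof -
    have "(-p) ^ ((Suc n)\<^sup>2) = (-1) ^ Suc n * q ^ (2 * (Suc n)\<^sup>2)" for n
    proof -
      have "(-p) ^ ((Suc n)\<^sup>2) = (-1) ^ ((Suc n) * (Suc n)) * p ^ ((Suc n)\<^sup>2)"
        by (simp add: power_minus' power2_eq_square)
      also have "\<dots> = (-1) ^ Suc n * q ^ (2 * (Suc n)\<^sup>2)"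
        unfolding neg1_sq p_def by (simp add: power_mult)
      finally show ?thesis .
    qed
    thus ?thesis by (simp add: th_def)
  qed
  define f where "f = (\<lambda>k. q ^ ((Suc k)\<^sup>2))"
  have fs: "f sums th q" unfolding f_def by (rule th_sums[OF q])
  have fms: "(\<lambda>m. (-1) ^ m * f m) sums (- th (-q))"
  proof -
    have "norm (-q) < 1" using q by simp
    from sums_minus[OF th_sums[OF this]] have "(\<lambda>n. - ((-q) ^ ((Suc n)\<^sup>2))) sums (- th (-q))" .
    moreover have "- ((-q) ^ ((Suc n)\<^sup>2)) = (-1) ^ n * f n" for n
    proof -
      have "(-q) ^ ((Suc n)\<^sup>2) = (-1) ^ ((Suc n) * (Suc n)) * q ^ ((Suc n)\<^sup>2)"
        by (simp add: power_minus' power2_eq_square)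
      thus ?thesis unfolding neg1_sq by (simp add: f_def)
    qed
    ultimately show ?thesis by simp
  qed
  note EO2 = sums_even_odd[OF fs fms]
  have T3: "(\<Sum>n. q ^ ((2 * Suc n - 1)\<^sup>2)) = (th q - th (-q)) / 2"
  proof -
    have "(\<lambda>n. f (2 * n)) = (\<lambda>n. q ^ ((2 * Suc n - 1)\<^sup>2))" by (simp add: f_def fun_eq_iff)
    with EO2(1) show ?thesis by (simp add: sums_iff)
  qed
  have T4: "(\<Sum>n. q ^ ((2 * Suc n)\<^sup>2)) = (th q + th (-q)) / 2"
  proof -
    have "(\<lambda>n. f (2 * n + 1)) = (\<lambda>n. q ^ ((2 * Suc n)\<^sup>2))" by (simp add: f_def fun_eq_iff)
    with EO2(2) show ?thesis by (simp add: sums_iff)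
  qed
  have F0: "C * (R - 1) = th q - th (-p)"
  proof -
    have "C * (R - 1) = C * R - C" by (simp add: algebra_simps)
    also have "\<dots> = (1 + 2 * th q) / 2 - C" unfolding CR ..
    also have "\<dots> = th q - th (-p)" unfolding CC by (simp add: field_simps)
    finally show ?thesis .
  qed
  have F1: "C * ((R - R') / 2) = (th q - th (-q)) / 2"
  proof -
    have "C * ((R - R') / 2) = (C * R - C * R') / 2" by (simp add: algebra_simps)
    also have "\<dots> = (th q - th (-q)) / 2" unfolding CR CR' by (simp add: field_simps)
    finally show ?thesis .
  qed
  have F2: "C * ((R + R') / 2 - 1) = (th q + th (-q)) / 2 - th (-p)"
  proof -
    have "C * ((R + R') / 2 - 1) = (C * R + C * R') / 2 - C" by (simp add: algebra_simps)
    also have "\<dots> = ((1 + 2 * th q) / 2 + (1 + 2 * th (-q)) / 2) / 2 - C" unfolding CR CR' ..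
    also have "\<dots> = (th q + th (-q)) / 2 - th (-p)" unfolding CC by (simp add: field_simps)
    finally show ?thesis .
  qed
  show ?thesis
    unfolding S0 S1 S2 T1 T2 T3 T4 F0 F1 F2 by simp
qed


end
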